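(* Let $b>1$ be an integer, let $n=b+1$, and consider the 2-connected $(3,b)$-puzzle on $V=\{1,\dots,n\}$, i.e. the cycle set consisting of the two cycles $\alpha=(1\ 2\ 3)$ and $\beta=(2\ 3\ 4\ \dots\ n)$. Then any even permutation of $V$ can be generated in $O(n^2)$ shifts; that is, there is an absolute constant $K$ (independent of $b$) such that every even permutation of $V$ is a product of at most $Kn^2$ factors, each of which is one of $\alpha,\alpha^{-1},\beta,\beta^{-1}$.
   Context: Permutations are written in cycle notation. A shift along a cycle $(v_1\ \dots\ v_j)$ corresponds to applying the permutation $(v_1\ \dots\ v_j)$ or its inverse to the tokens placed on the vertices of $V$. *)

theory Defs
  imports "HOL-Combinatorics.Combinatorics"
begin

definition puz_alpha :: "nat \<Rightarrow> nat" where
  "puz_alpha = cycle_of_list [1, 2, 3]"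

definition puz_beta :: "nat \<Rightarrow> nat \<Rightarrow> nat" where
  "puz_beta n = cycle_of_list [2..<n+1]"

definition puz_shifts :: "nat \<Rightarrow> (nat \<Rightarrow> nat) set" where
  "puz_shifts n = {puz_alpha, inv puz_alpha, puz_beta n, inv (puz_beta n)}"

end

theory Submission
  imports Defs
begin


definition cyc3 :: "nat \<Rightarrow> nat \<Rightarrow> nat \<Rightarrow> nat \<Rightarrow> nat" where
  "cyc3 a b c z = (if z = a then b else if z = b then c else if z = c then a else z)"

lemma alpha_eq: "puz_alpha = cyc3 1 2 3"
  by (auto simp: puz_alpha_def cyc3_def fun_eq_iff transpose_def)

lemma cycle_upt:
  "cycle_of_list [a..<a+k+2] z = (if a \<le> z \<and> z < a+k+1 then z+1 else if z = a+k+1 then a else z)"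
proof (induction k arbitrary: a)
  case 0
  then show ?case by (auto simp: transpose_def upt_rec)
next
  case (Suc k)
  have e: "[a..<a+Suc k+2] = a # (a+1) # [a+2..<a+Suc k+2]"
    by (simp add: upt_rec)
  have e2: "[a+1..<(a+1)+k+2] = (a+1) # [a+2..<a+Suc k+2]"
    by (simp add: upt_rec)
  have c: "cycle_of_list (a # (a+1) # rest) = transpose a (a+1) \<circ> cycle_of_list ((a+1) # rest)" for rest
    by simp
  have "cycle_of_list [a..<a+Suc k+2] z = transpose a (a+1) (cycle_of_list [a+1..<(a+1)+k+2] z)"
    unfolding e e2 c by simp
  then show ?case using Suc[of "a+1"] by (auto simp: transpose_def)
qed

lemma beta_eq:
  assumes "n \<ge> 3"
  shows "puz_beta n z = (if 2 \<le> z \<and> z < n then z+1 else if z = n then 2 else z)"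
proof -
  have "n + 1 = 2 + (n-3) + 2" using assms by simp
  then show ?thesis using cycle_upt[of 2 "n-3" z] assms unfolding puz_beta_def by auto
qed

lemma bij_alpha: "bij puz_alpha"
  unfolding puz_alpha_def using cycle_permutes permutes_bij by blast
lemma bij_beta: "bij (puz_beta n)"
  unfolding puz_beta_def using cycle_permutes permutes_bij by blast


lemma foldr_comp_gen: "foldr (\<circ>) ws g = foldr (\<circ>) ws id \<circ> (g::'a\<Rightarrow>'a)"
  by (induction ws) auto

lemma foldr_comp_Cons: "foldr (\<circ>) (a # l) id = a \<circ> foldr (\<circ>) l (id::'a\<Rightarrow>'a)"
  by (rule ext) simp

lemma foldr_comp_append: "foldr (\<circ>) (xs @ ys) id = foldr (\<circ>) xs id \<circ> foldr (\<circ>) ys (id::'a\<Rightarrow>'a)"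
  by (simp only: foldr_append) (rule foldr_comp_gen)

definition gen :: "nat \<Rightarrow> nat \<Rightarrow> (nat \<Rightarrow> nat) \<Rightarrow> bool" where
  "gen n L p \<longleftrightarrow> (\<exists>ws. set ws \<subseteq> puz_shifts n \<and> length ws \<le> L \<and> p = foldr (\<circ>) ws id)"

lemma gen_comp: "gen n L1 p \<Longrightarrow> gen n L2 q \<Longrightarrow> gen n (L1+L2) (p \<circ> q)"
  unfolding gen_def
proof (elim exE conjE)
  fix ws vs assume "set ws \<subseteq> puz_shifts n" "length ws \<le> L1" "p = foldr (\<circ>) ws id"
    "set vs \<subseteq> puz_shifts n" "length vs \<le> L2" "q = foldr (\<circ>) vs id"
  then show "\<exists>ws. set ws \<subseteq> puz_shifts n \<and> length ws \<le> L1 + L2 \<and> p \<circ> q = foldr (\<circ>) ws id"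
    by (intro exI[of _ "ws @ vs"]) (auto simp only: foldr_comp_append set_append length_append Un_subset_iff add_mono)
qed

lemma gen_mono: "gen n L p \<Longrightarrow> L \<le> M \<Longrightarrow> gen n M p"
  unfolding gen_def by fastforce

lemma gen_id: "gen n L id"
  unfolding gen_def by (intro exI[of _ "[]"]) auto

lemma gen_shift: "s \<in> puz_shifts n \<Longrightarrow> gen n 1 s"
  unfolding gen_def by (intro exI[of _ "[s]"]) auto

definition sig :: "nat \<Rightarrow> nat \<Rightarrow> nat" where "sig n = puz_alpha \<circ> puz_beta n"

lemma gen_sig: "gen n 2 (sig n)"
  using gen_comp[OF gen_shift gen_shift, of puz_alpha n "puz_beta n"]
  unfolding sig_def puz_shifts_def by (auto simp: numeral_2_eq_2)

lemma gen_inv_sig: "gen n 2 (inv (sig n))"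
proof -
  have "inv (sig n) = inv (puz_beta n) \<circ> inv puz_alpha"
    unfolding sig_def using o_inv_distrib[OF bij_alpha bij_beta] .
  then show ?thesis
    using gen_comp[OF gen_shift gen_shift, of "inv (puz_beta n)" n "inv puz_alpha"]
    unfolding puz_shifts_def by (auto simp: numeral_2_eq_2)
qed

lemma sig_val: "n \<ge> 3 \<Longrightarrow> sig n z = cyc3 1 2 3 (if 2 \<le> z \<and> z < n then z+1 else if z = n then 2 else z)"
  unfolding sig_def by (simp add: alpha_eq beta_eq)

lemma sig_val2: "n \<ge> 3 \<Longrightarrow> sig n z = (if z = 1 then 2 else if z = 2 then 1 else if 3 \<le> z \<and> z < n then z+1 else if z = n then 3 else z)"
  by (simp add: sig_val cyc3_def)

lemma conj_step:
  assumes "n \<ge> 3" "3 \<le> y" "y < n"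
  shows "cyc3 1 2 (y+1) = sig n \<circ> cyc3 2 1 y \<circ> inv (sig n)"
    and "cyc3 2 1 (y+1) = sig n \<circ> cyc3 1 2 y \<circ> inv (sig n)"
proof -
  have b: "bij (sig n)" unfolding sig_def using bij_alpha bij_beta bij_comp by blast
  have si: "sig n \<circ> inv (sig n) = id" using b bij_is_surj surj_iff by blast
  have s1: "sig n 1 = 2" "sig n 2 = 1" "sig n y = y + 1"
    using assms by (simp_all add: sig_val2)
  have s2: "sig n z \<notin> {1, 2, y+1}" if "z \<notin> {1, 2, y}" for z
  proof (cases "3 \<le> z \<and> z < n")
    case True
    then show ?thesis using that assms by (simp add: sig_val2)
  next
    case False
    then show ?thesis using that assms by (cases "z = n"; simp add: sig_val2; arith)
  qed
  have c1: "cyc3 1 2 (y+1) 1 = 2" "cyc3 1 2 (y+1) 2 = y+1" "cyc3 1 2 (y+1) (y+1) = 1"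
    "cyc3 2 1 (y+1) 1 = y+1" "cyc3 2 1 (y+1) 2 = 1" "cyc3 2 1 (y+1) (y+1) = 2"
    "cyc3 2 1 y 1 = y" "cyc3 2 1 y 2 = 1" "cyc3 2 1 y y = 2"
    "cyc3 1 2 y 1 = 2" "cyc3 1 2 y 2 = y" "cyc3 1 2 y y = 1"
    using assms by (simp_all add: cyc3_def)
  have c2: "cyc3 a b c z = z" if "z \<notin> {a, b, c}" for a b c z
    using that by (simp add: cyc3_def)
  have 1: "sig n \<circ> cyc3 2 1 y = cyc3 1 2 (y+1) \<circ> sig n"
  proof
    fix z show "(sig n \<circ> cyc3 2 1 y) z = (cyc3 1 2 (y+1) \<circ> sig n) z"
    proof (cases "z \<in> {1, 2, y}")
      case True
      then show ?thesis using s1 c1 by auto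
    next
      case False
      then show ?thesis using s2[OF False] c2[of z 2 1 y] c2[of "sig n z" 1 2 "y+1"]
        by (simp add: insert_commute)
    qed
  qed
  have 2: "sig n \<circ> cyc3 1 2 y = cyc3 2 1 (y+1) \<circ> sig n"
  proof
    fix z show "(sig n \<circ> cyc3 1 2 y) z = (cyc3 2 1 (y+1) \<circ> sig n) z"
    proof (cases "z \<in> {1, 2, y}")
      case True
      then show ?thesis using s1 c1 by auto
    next
      case False
      then show ?thesis using s2[OF False] c2[of z 1 2 y] c2[of "sig n z" 2 1 "y+1"]
        by (simp add: insert_commute)
    qed
  qed
  show "cyc3 1 2 (y+1) = sig n \<circ> cyc3 2 1 y \<circ> inv (sig n)"
    by (metis 1 comp_assoc si comp_id)
  show "cyc3 2 1 (y+1) = sig n \<circ> cyc3 1 2 y \<circ> inv (sig n)"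
    by (metis 2 comp_assoc si comp_id)
qed

lemma gen_cyc:
  assumes "n \<ge> 3" "3 + k \<le> n"
  shows "gen n (4*k+1) (cyc3 1 2 (3+k)) \<and> gen n (4*k+1) (cyc3 2 1 (3+k))"
  using assms(2)
proof (induction k)
  case 0
  have "cyc3 1 2 3 = puz_alpha" by (simp add: alpha_eq)
  moreover have "cyc3 2 1 3 = inv puz_alpha"
  proof -
    have "puz_alpha \<circ> cyc3 2 1 3 = id" "cyc3 2 1 3 \<circ> puz_alpha = id"
      by (auto simp: alpha_eq cyc3_def fun_eq_iff)
    then show ?thesis by (simp add: inv_unique_comp)
  qed
  moreover have "puz_alpha \<in> puz_shifts n" "inv puz_alpha \<in> puz_shifts n"
    unfolding puz_shifts_def by simp_all
  ultimately show ?case using gen_shift[of _ n] by simp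
next
  case (Suc k)
  then have ih: "gen n (4*k+1) (cyc3 1 2 (3+k))" "gen n (4*k+1) (cyc3 2 1 (3+k))" by auto
  have y: "3 \<le> 3+k" "3+k < n" using Suc by auto
  have a: "gen n (2 + (4*k+1) + 2) (sig n \<circ> cyc3 2 1 (3+k) \<circ> inv (sig n))"
    by (intro gen_comp gen_sig gen_inv_sig ih)
  have b: "gen n (2 + (4*k+1) + 2) (sig n \<circ> cyc3 1 2 (3+k) \<circ> inv (sig n))"
    by (intro gen_comp gen_sig gen_inv_sig ih)
  have e: "3 + Suc k = (3+k)+1" "2 + (4*k+1) + 2 = 4 * Suc k + 1" by simp_all
  show ?case using a b unfolding conj_step[OF assms(1) y, symmetric] e by simp
qed


definition piv :: "nat \<Rightarrow> nat \<Rightarrow> nat" where "piv x = transpose 1 x"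

lemma gen_cyc_y:
  assumes "n \<ge> 3" "3 \<le> y" "y \<le> n"
  shows "gen n (4*n) (cyc3 1 2 y) \<and> gen n (4*n) (cyc3 2 1 y)"
proof -
  have "3 + (y-3) \<le> n" "3 + (y-3) = y" using assms by auto
  moreover have "4*(y-3)+1 \<le> 4*n" using assms by simp
  ultimately show ?thesis using gen_cyc[OF assms(1), of "y-3"] gen_mono by metis
qed

lemma gen_pair:
  assumes "n \<ge> 3" "x \<in> {2..n}" "y \<in> {2..n}"
  shows "gen n (8*n) (piv x \<circ> piv y)"
proof -
  have l: "gen n (4*n) (piv z \<circ> piv 2)" "gen n (4*n) (piv 2 \<circ> piv z)" if "z \<in> {2..n}" for z
  proof -
    have "(piv z \<circ> piv 2 = id \<and> piv 2 \<circ> piv z = id) \<or>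
          (piv z \<circ> piv 2 = cyc3 1 2 z \<and> piv 2 \<circ> piv z = cyc3 2 1 z \<and> 3 \<le> z)"
      using that by (cases "z = 2") (auto simp: piv_def cyc3_def fun_eq_iff transpose_def)
    then show "gen n (4*n) (piv z \<circ> piv 2)" "gen n (4*n) (piv 2 \<circ> piv z)"
      using gen_cyc_y[OF assms(1), of z] gen_id that by auto
  qed
  have "piv x \<circ> piv y = (piv x \<circ> piv 2) \<circ> (piv 2 \<circ> piv y)"
    by (simp add: piv_def comp_assoc[symmetric]) (simp add: comp_assoc)
  then show ?thesis using gen_comp[OF l(1)[OF assms(2)] l(2)[OF assms(3)]] by simp
qed

lemma gen_pairs:
  assumes "n \<ge> 3"
  shows "even (length xs) \<Longrightarrow> set xs \<subseteq> {2..n} \<Longrightarrow> gen n (length xs * (4*n)) (foldr (\<circ>) (map piv xs) id)"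
proof (induction xs rule: induct_list012)
  case 1
  then show ?case using gen_id by (simp add: id_def)
next
  case (2 x)
  then show ?case by simp
next
  case (3 x y zs)
  have ih: "gen n (length zs * (4*n)) (foldr (\<circ>) (map piv zs) id)"
    by (rule "3.IH") (use "3.prems" in auto)
  have pr: "gen n (8*n) (piv x \<circ> piv y)"
    by (rule gen_pair) (use "3.prems" assms in auto)
  have "gen n (8*n + length zs * (4*n)) ((piv x \<circ> piv y) \<circ> foldr (\<circ>) (map piv zs) id)"
    by (rule gen_comp[OF pr ih])
  then show ?case
    by (simp only: list.map foldr_comp_Cons comp_assoc) (erule gen_mono, simp)
qed

lemma swapidseq_piv: "1 \<notin> set xs \<Longrightarrow> swapidseq (length xs) (foldr (\<circ>) (map piv xs) id)"
proof (induction xs)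
  case Nil
  then show ?case by (simp add: id_def)
next
  case (Cons x xs)
  have ih: "swapidseq (length xs) (foldr (\<circ>) (map piv xs) id)"
    by (rule Cons.IH) (use Cons.prems in auto)
  have "swapidseq (Suc (length xs)) (piv x \<circ> foldr (\<circ>) (map piv xs) id)"
    unfolding piv_def by (rule swapidseq.comp_Suc[OF ih[unfolded piv_def]]) (use Cons.prems in auto)
  then show ?case by (simp only: list.map foldr_comp_Cons length_Cons)
qed

definition pl :: "nat \<Rightarrow> nat \<Rightarrow> nat list" where
  "pl a b = (if a = 1 then [b] else if b = 1 then [a] else [a, b, a])"

lemma pl_eq:
  assumes ab: "a \<noteq> b"
  shows "transpose a b = foldr (\<circ>) (map piv (pl a b)) id"
proof -
  have f1: "foldr (\<circ>) (map piv [x]) id = transpose 1 x" for x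
    by (simp only: list.map foldr_comp_Cons foldr_Nil id_apply comp_id piv_def)
  have f3: "foldr (\<circ>) (map piv [x, y, x]) id = transpose 1 x \<circ> transpose 1 y \<circ> transpose 1 x" for x y
    by (simp only: list.map foldr_comp_Cons foldr_Nil id_apply comp_id piv_def comp_assoc)
  show ?thesis
  proof (cases "a = 1")
    case True
    have "pl a b = [b]" using True by (simp add: pl_def)
    then show ?thesis by (simp only: f1 True)
  next
    case a: False
    show ?thesis
    proof (cases "b = 1")
      case True
      have "pl a b = [a]" using True a by (simp add: pl_def)
      then show ?thesis by (simp only: f1 True transpose_commute)
    next
      case b: False
      have "transpose a 1 \<circ> transpose 1 b \<circ> transpose a 1 = transpose a b"
        by (rule transpose_comp_triple) (use ab b in auto)
      moreover have "pl a b = [a, b, a]" using a b by (simp add: pl_def)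
      ultimately show ?thesis by (simp only: f3 transpose_commute[of a 1])
    qed
  qed
qed

lemma decomp:
  "finite S \<Longrightarrow> p permutes S \<Longrightarrow> \<exists>xs. set xs \<subseteq> S - {1} \<and> length xs \<le> 3 * card S \<and> p = foldr (\<circ>) (map piv xs) id"
proof (induction S arbitrary: p rule: finite_induct)
  case empty
  then have "p = id" by simp
  then show ?case by (intro exI[of _ "[]"]) simp
next
  case (insert x F)
  define q where "q = transpose x (p x) \<circ> p"
  have q: "q permutes F" unfolding q_def by (rule permutes_insert_lemma[OF insert.prems])
  obtain ys where ys: "set ys \<subseteq> F - {1}" "length ys \<le> 3 * card F" "q = foldr (\<circ>) (map piv ys) id"
    using insert.IH[OF q] by blast
  have pq: "p = transpose x (p x) \<circ> q" unfolding q_def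
    by (simp only: comp_assoc[symmetric] transpose_comp_involutory id_comp)
  have px: "p x \<in> insert x F" using permutes_in_image[OF insert.prems, of x] by simp
  have cF: "card (insert x F) = Suc (card F)" by (rule card_insert_disjoint[OF insert.hyps(1,2)])
  show ?case
  proof (cases "p x = x")
    case True
    then have "p = q" using pq by simp
    moreover have "set ys \<subseteq> insert x F - {1}" using ys(1) by blast
    moreover have "length ys \<le> 3 * card (insert x F)" using ys(2) cF by simp
    ultimately show ?thesis using ys(3) by blast
  next
    case False
    have s1: "set (pl x (p x)) \<subseteq> insert x F - {1}" "length (pl x (p x)) \<le> 3"
      unfolding pl_def using px False by auto
    have e: "p = foldr (\<circ>) (map piv (pl x (p x) @ ys)) id"
      unfolding map_append foldr_comp_append pl_eq[OF False[symmetric], symmetric] ys(3)[symmetric]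
      by (rule pq)
    have "set (pl x (p x) @ ys) \<subseteq> insert x F - {1}" using s1 ys(1) by auto
    moreover have "length (pl x (p x) @ ys) \<le> 3 * card (insert x F)" using s1 ys(2) cF by simp
    ultimately show ?thesis using e by blast
  qed
qed

theorem lemma1:
  shows "\<exists>K::nat. \<forall>b::nat. b > 1 \<longrightarrow>
    (\<forall>p. p permutes {1..b+1} \<and> evenperm p \<longrightarrow>
      (\<exists>ws. set ws \<subseteq> puz_shifts (b+1) \<and> length ws \<le> K * (b+1)^2 \<and>
            p = foldr (\<circ>) ws id))"
proof (intro exI[of _ 12] allI impI, elim conjE)
  fix b :: nat and p
  assume b: "b > 1" and p: "p permutes {1..b+1}" and ev: "evenperm p"
  define n where "n = b + 1"
  have n3: "n \<ge> 3" using b n_def by simp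
  obtain xs where xs: "set xs \<subseteq> {1..n} - {1}" "length xs \<le> 3 * card {1..n}"
    "p = foldr (\<circ>) (map piv xs) id"
    using decomp[of "{1..n}" p] p n_def by auto
  have "evenperm p = even (length xs)"
    using evenperm_unique[OF swapidseq_piv refl] xs by auto
  then have e: "even (length xs)" using ev by simp
  have s: "set xs \<subseteq> {2..n}" using xs(1) by auto
  have g: "gen n (length xs * (4*n)) p" using gen_pairs[OF n3 e s] xs(3) by simp
  have "length xs * (4*n) \<le> (3*n) * (4*n)" using xs(2) by (intro mult_right_mono) auto
  also have "\<dots> = 12 * n^2" by (simp add: power2_eq_square)
  finally have "gen n (12 * n^2) p" using g gen_mono by blast
  then show "\<exists>ws. set ws \<subseteq> puz_shifts (b+1) \<and> length ws \<le> 12 * (b+1)^2 \<and> p = foldr (\<circ>) ws id"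
    unfolding gen_def n_def .
qed

end
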